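(* Let $J$ be a finite poset on $\{1,\dots,n\}$ and let $J_p\subseteq J$ be a $p$-anchored path. (a) $J$ is strongly Gram $\mathbb Z$-congruent to the poset $J^{\to}$ whose Hasse digraph is obtained from $\mathcal H(J)$ by reorienting the arrows between vertices of $J_p$ (keeping the same underlying path) so that $J_p$ becomes an outward $p$-anchored path. (b) $J$ is strongly Gram $\mathbb Z$-congruent to the poset $J^{\leftarrow}$ whose Hasse digraph is obtained from $\mathcal H(J)$ by reorienting the arrows between vertices of $J_p$ (keeping the same underlying path) so that $J_p$ becomes an inward $p$-anchored path. (c) For every orientation of the arrows of the path $\mathcal H(J_p)$, the poset $\widetilde J$ whose Hasse digraph is obtained from $\mathcal H(J)$ by replacing the arrows between vertices of $J_p$ by this orientation is non-negative of corank $r\ge0$ if and only if $J$ is non-negative of corank $r$.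
   Context: For a finite poset $I$ on $\{1,\dots,n\}$: $C_I=[c_{ij}]$ with $c_{ij}=1$ iff $i\preceq_I j$ (else $0$); $G_I=\tfrac12(C_I+C_I^{tr})$; $I$ is non-negative of corank $r$ if $G_I$ is positive semi-definite of rank $n-r$. Posets $I,J$ on $\{1,\dots,n\}$ are strongly Gram $\mathbb Z$-congruent if $C_I=B^{tr}C_JB$ for some integer matrix $B$ with $\det B=\pm1$. $\mathcal H(I)$ is the Hasse digraph (arrow $i\to j$ iff $i\prec_I j$ with no element strictly between). A subset $J_p\subseteq J$ with $p\in J_p$ is a $p$-anchored path if: $\mathcal H(J)$ with $p$ deleted is disconnected, $J_p\setminus\{p\}$ is the vertex set of one of its connected components, the subdigraph of $\mathcal H(J)$ induced on $J_p$ has a path as underlying graph, and $p$ has degree $1$ in it. It is inward (resp. outward) if $p$ is the unique maximal (resp. minimal) element of $J_p$ in the induced order. *)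

theory Defs
  imports "HOL-Analysis.Analysis"
begin

text \<open>A finite poset on the n-element ground set is modelled as a partial order
  relation on a finite type 'n (with CARD('n) = n playing the role of {1..n}).\<close>

definition is_poset :: "('n \<Rightarrow> 'n \<Rightarrow> bool) \<Rightarrow> bool" where
  "is_poset le \<longleftrightarrow> (\<forall>i. le i i) \<and> (\<forall>i j. le i j \<and> le j i \<longrightarrow> i = j)
     \<and> (\<forall>i j k. le i j \<and> le j k \<longrightarrow> le i k)"

definition incmat :: "('n::finite \<Rightarrow> 'n \<Rightarrow> bool) \<Rightarrow> int^'n^'n" where
  "incmat le = (\<chi> i j. if le i j then 1 else 0)"

definition gram :: "('n::finite \<Rightarrow> 'n \<Rightarrow> bool) \<Rightarrow> real^'n^'n" where
  "gram le = (\<chi> i j. (real_of_int (incmat le $ i $ j) + real_of_int (incmat le $ j $ i)) / 2)"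

definition psd :: "real^'n^'n \<Rightarrow> bool" where
  "psd G \<longleftrightarrow> (\<forall>x. 0 \<le> x \<bullet> (G *v x))"

definition nonneg_corank :: "('n::finite \<Rightarrow> 'n \<Rightarrow> bool) \<Rightarrow> nat \<Rightarrow> bool" where
  "nonneg_corank le r \<longleftrightarrow> psd (gram le) \<and> r \<le> CARD('n) \<and> rank (gram le) = CARD('n) - r"

definition strong_gram_congr :: "('n::finite \<Rightarrow> 'n \<Rightarrow> bool) \<Rightarrow> ('n \<Rightarrow> 'n \<Rightarrow> bool) \<Rightarrow> bool" where
  "strong_gram_congr I J \<longleftrightarrow>
     (\<exists>B :: int^'n^'n. (det B = 1 \<or> det B = -1) \<and> incmat I = transpose B ** incmat J ** B)"

definition hasse :: "('n \<Rightarrow> 'n \<Rightarrow> bool) \<Rightarrow> 'n \<Rightarrow> 'n \<Rightarrow> bool" where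
  "hasse le i j \<longleftrightarrow> le i j \<and> i \<noteq> j \<and> \<not> (\<exists>k. k \<noteq> i \<and> k \<noteq> j \<and> le i k \<and> le k j)"

definition hadj :: "('n \<Rightarrow> 'n \<Rightarrow> bool) \<Rightarrow> 'n \<Rightarrow> 'n \<Rightarrow> bool" where
  "hadj le i j \<longleftrightarrow> hasse le i j \<or> hasse le j i"

definition conn_del :: "('n \<Rightarrow> 'n \<Rightarrow> bool) \<Rightarrow> 'n \<Rightarrow> 'n \<Rightarrow> 'n \<Rightarrow> bool" where
  "conn_del le p = (\<lambda>u v. u \<noteq> p \<and> v \<noteq> p \<and> hadj le u v)\<^sup>*\<^sup>*"

definition is_component_del :: "('n \<Rightarrow> 'n \<Rightarrow> bool) \<Rightarrow> 'n \<Rightarrow> 'n set \<Rightarrow> bool" where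
  "is_component_del le p C \<longleftrightarrow> C \<noteq> {} \<and> p \<notin> C \<and>
     (\<forall>u\<in>C. \<forall>v. v \<noteq> p \<longrightarrow> (conn_del le p u v \<longleftrightarrow> v \<in> C))"

definition disconnected_del :: "('n \<Rightarrow> 'n \<Rightarrow> bool) \<Rightarrow> 'n \<Rightarrow> bool" where
  "disconnected_del le p \<longleftrightarrow> (\<exists>u v. u \<noteq> p \<and> v \<noteq> p \<and> \<not> conn_del le p u v)"

definition induced_is_path :: "('n \<Rightarrow> 'n \<Rightarrow> bool) \<Rightarrow> 'n set \<Rightarrow> bool" where
  "induced_is_path le S \<longleftrightarrow> (\<exists>xs. distinct xs \<and> set xs = S \<and>
     (\<forall>u\<in>S. \<forall>v\<in>S. hadj le u v \<longleftrightarrow>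
        (\<exists>i. Suc i < length xs \<and> {xs ! i, xs ! Suc i} = {u, v})))"

definition anchored_path :: "('n \<Rightarrow> 'n \<Rightarrow> bool) \<Rightarrow> 'n \<Rightarrow> 'n set \<Rightarrow> bool" where
  "anchored_path le p S \<longleftrightarrow> p \<in> S \<and> disconnected_del le p \<and> is_component_del le p (S - {p})
     \<and> induced_is_path le S \<and> card {v \<in> S. hadj le p v} = 1"

definition inward_anchored_path :: "('n \<Rightarrow> 'n \<Rightarrow> bool) \<Rightarrow> 'n \<Rightarrow> 'n set \<Rightarrow> bool" where
  "inward_anchored_path le p S \<longleftrightarrow> anchored_path le p S \<and>
     {x \<in> S. \<forall>y \<in> S. le x y \<longrightarrow> y = x} = {p}"

definition outward_anchored_path :: "('n \<Rightarrow> 'n \<Rightarrow> bool) \<Rightarrow> 'n \<Rightarrow> 'n set \<Rightarrow> bool" where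
  "outward_anchored_path le p S \<longleftrightarrow> anchored_path le p S \<and>
     {x \<in> S. \<forall>y \<in> S. le y x \<longrightarrow> y = x} = {p}"

definition reoriented_on :: "('n \<Rightarrow> 'n \<Rightarrow> bool) \<Rightarrow> 'n set \<Rightarrow> ('n \<Rightarrow> 'n \<Rightarrow> bool) \<Rightarrow> bool" where
  "reoriented_on J S J' \<longleftrightarrow> is_poset J' \<and>
     (\<forall>u v. \<not> (u \<in> S \<and> v \<in> S) \<longrightarrow> (hasse J' u v \<longleftrightarrow> hasse J u v)) \<and>
     (\<forall>u\<in>S. \<forall>v\<in>S. hadj J' u v \<longleftrightarrow> hadj J u v)"

end

theory Submission
  imports Defs
begin


definition ordp :: "(nat \<Rightarrow> bool) \<Rightarrow> nat \<Rightarrow> nat \<Rightarrow> bool" where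
  "ordp e i j \<longleftrightarrow> (i \<le> j \<and> (\<forall>m. i < m \<and> m \<le> j \<longrightarrow> e m)) \<or> (j \<le> i \<and> (\<forall>m. j < m \<and> m \<le> i \<longrightarrow> \<not> e m))"

definition "Up e (a::nat) b \<longleftrightarrow> (\<forall>m. a < m \<and> m \<le> b \<longrightarrow> e m)"
definition "Dn e (a::nat) b \<longleftrightarrow> (\<forall>m. a < m \<and> m \<le> b \<longrightarrow> \<not> e m)"

lemma ordp_le: "i \<le> j \<Longrightarrow> ordp e i j \<longleftrightarrow> Up e i j"
  unfolding ordp_def Up_def by auto
lemma ordp_ge: "j \<le> i \<Longrightarrow> ordp e i j \<longleftrightarrow> Dn e j i"
  unfolding ordp_def Dn_def by auto

lemma Up_split: "a \<le> b \<Longrightarrow> b \<le> c \<Longrightarrow> Up e a c \<longleftrightarrow> Up e a b \<and> Up e b c"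
  unfolding Up_def by (meson le_less_trans le_trans linorder_not_le)
lemma Dn_split: "a \<le> b \<Longrightarrow> b \<le> c \<Longrightarrow> Dn e a c \<longleftrightarrow> Dn e a b \<and> Dn e b c"
  unfolding Dn_def by (meson le_less_trans le_trans linorder_not_le)
lemma Up_Suc: "Up e a (Suc a) \<longleftrightarrow> e (Suc a)"
  unfolding Up_def by (auto simp: le_Suc_eq)
lemma Dn_Suc: "Dn e a (Suc a) \<longleftrightarrow> \<not> e (Suc a)"
  unfolding Dn_def by (auto simp: le_Suc_eq)
lemma Up_refl[simp]: "Up e a a" unfolding Up_def by (meson leD)
lemma Dn_refl[simp]: "Dn e a a" unfolding Dn_def by (meson leD)
lemma Up_cong: "(\<And>m. a < m \<Longrightarrow> m \<le> b \<Longrightarrow> e m = e' m) \<Longrightarrow> Up e a b = Up e' a b"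
  unfolding Up_def by auto
lemma Dn_cong: "(\<And>m. a < m \<Longrightarrow> m \<le> b \<Longrightarrow> e m = e' m) \<Longrightarrow> Dn e a b = Dn e' a b"
  unfolding Dn_def by auto
lemma Up_Dn: "a < b \<Longrightarrow> Up e a b \<Longrightarrow> Dn e a b \<Longrightarrow> False"
  unfolding Up_def Dn_def by (metis Suc_leI lessI)

lemma ordp_refl[simp]: "ordp e i i"
  unfolding ordp_def by auto

lemma ordp_antisym: "ordp e i j \<Longrightarrow> ordp e j i \<Longrightarrow> i = j"
  by (metis Up_Dn linorder_neqE_nat ordp_ge ordp_le order.strict_implies_order)

lemma ordp_trans: "ordp e i j \<Longrightarrow> ordp e j l \<Longrightarrow> ordp e i l"
proof -
  assume 1: "ordp e i j" and 2: "ordp e j l"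
  show ?thesis
  proof (cases "i = j \<or> j = l")
    case True then show ?thesis using 1 2 by auto
  next
    case False
    then have ij: "i \<noteq> j" and jl: "j \<noteq> l" by auto
    show ?thesis
    proof (cases "i < j")
      case a: True
      then have u1: "Up e i j" using 1 ordp_le by auto
      show ?thesis
      proof (cases "j < l")
        case True
        then have "Up e j l" using 2 ordp_le by auto
        then show ?thesis using u1 a True Up_split[of i j l e] ordp_le by auto
      next
        case False
        then have "l < j" using jl by auto
        then have "Dn e l j" using 2 ordp_ge by auto
        then have "\<not> e j" using \<open>l < j\<close> unfolding Dn_def by auto
        moreover have "e j" using u1 a unfolding Up_def by auto
        ultimately show ?thesis by auto
      qed
    next
      case False
      then have a: "j < i" using ij by auto
      then have d1: "Dn e j i" using 1 ordp_ge by auto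
      show ?thesis
      proof (cases "j < l")
        case True
        then have "Up e j l" using 2 ordp_le by auto
        then have "e (Suc j)" using True unfolding Up_def by auto
        moreover have "\<not> e (Suc j)" using d1 a unfolding Dn_def by auto
        ultimately show ?thesis by auto
      next
        case False
        then have "l < j" using jl by auto
        then have "Dn e l j" using 2 ordp_ge by auto
        then show ?thesis using d1 a \<open>l < j\<close> Dn_split[of l j i e] ordp_ge by auto
      qed
    qed
  qed
qed

lemma ordp_Suc: "ordp e i (Suc i) \<longleftrightarrow> e (Suc i)"
  using ordp_le[of i "Suc i" e] Up_Suc by auto
lemma ordp_Suc2: "ordp e (Suc i) i \<longleftrightarrow> \<not> e (Suc i)"
  using ordp_ge[of i "Suc i" e] Dn_Suc by auto

lemma ordp_true: "ordp (\<lambda>_. True) i j \<longleftrightarrow> i \<le> j"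
  unfolding ordp_def by auto
lemma ordp_false: "ordp (\<lambda>_. False) i j \<longleftrightarrow> j \<le> i"
  unfolding ordp_def by auto

lemma ordp_cong: "(\<And>m. 0 < m \<Longrightarrow> m \<le> k \<Longrightarrow> e m = e' m) \<Longrightarrow> i \<le> k \<Longrightarrow> j \<le> k \<Longrightarrow> ordp e i j = ordp e' i j"
proof -
  assume h: "\<And>m. 0 < m \<Longrightarrow> m \<le> k \<Longrightarrow> e m = e' m" and ik: "i \<le> k" and jk: "j \<le> k"
  show ?thesis
  proof (cases "i \<le> j")
    case True
    have "Up e i j = Up e' i j" by (rule Up_cong) (use h jk in auto)
    then show ?thesis using True ordp_le by auto
  next
    case False
    have "Dn e j i = Dn e' j i" by (rule Dn_cong) (use h ik in auto)
    then show ?thesis using False ordp_ge by auto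
  qed
qed

lemma Up_sub: "a \<le> a' \<Longrightarrow> b' \<le> b \<Longrightarrow> Up e a b \<Longrightarrow> Up e a' b'"
  unfolding Up_def by (metis le_less_trans le_trans)
lemma Dn_sub: "a \<le> a' \<Longrightarrow> b' \<le> b \<Longrightarrow> Dn e a b \<Longrightarrow> Dn e a' b'"
  unfolding Dn_def by (metis le_less_trans le_trans)

lemma ordp_cover: "ordp e i j \<Longrightarrow> i \<noteq> j \<Longrightarrow> i < L \<Longrightarrow> j < L \<Longrightarrow> (\<forall>m<L. m \<noteq> i \<and> m \<noteq> j \<longrightarrow> \<not> (ordp e i m \<and> ordp e m j)) \<Longrightarrow>
   (j = Suc i \<and> e j) \<or> (i = Suc j \<and> \<not> e i)"
proof -
  assume a: "ordp e i j" "i \<noteq> j" and iL: "i < L" "j < L" and c: "\<forall>m<L. m \<noteq> i \<and> m \<noteq> j \<longrightarrow> \<not> (ordp e i m \<and> ordp e m j)"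
  show ?thesis
  proof (cases "i < j")
    case True
    with a have ee: "Up e i j" using ordp_le by auto
    have "j = Suc i"
    proof (rule ccontr)
      assume "j \<noteq> Suc i"
      then have "Suc i < j" using True by auto
      then have "ordp e i (Suc i) \<and> ordp e (Suc i) j" using ee Up_split[of i "Suc i" j e] ordp_le by auto
      then show False using c \<open>Suc i < j\<close> iL by auto
    qed
    then show ?thesis using ee Up_Suc by auto
  next
    case False
    with a have lt: "j < i" by auto
    with a have ee: "Dn e j i" using ordp_ge by auto
    have "i = Suc j"
    proof (rule ccontr)
      assume "i \<noteq> Suc j"
      then have "Suc j < i" using lt by auto
      then have "ordp e i (Suc j) \<and> ordp e (Suc j) j" using ee Dn_split[of j "Suc j" i e] ordp_ge by auto
      then show False using c \<open>Suc j < i\<close> iL by auto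
    qed
    then show ?thesis using ee Dn_Suc by auto
  qed
qed

lemma ordp_hasse_iff: "i < L \<Longrightarrow> j < L \<Longrightarrow> (ordp e i j \<and> i \<noteq> j \<and> \<not> (\<exists>m<L. m \<noteq> i \<and> m \<noteq> j \<and> ordp e i m \<and> ordp e m j))
   \<longleftrightarrow> (j = Suc i \<and> e j) \<or> (i = Suc j \<and> \<not> e i)"
proof
  assume "i < L" "j < L" "ordp e i j \<and> i \<noteq> j \<and> \<not> (\<exists>m<L. m \<noteq> i \<and> m \<noteq> j \<and> ordp e i m \<and> ordp e m j)"
  then show "(j = Suc i \<and> e j) \<or> (i = Suc j \<and> \<not> e i)" using ordp_cover[of e i j L] by blast
next
  assume h: "(j = Suc i \<and> e j) \<or> (i = Suc j \<and> \<not> e i)"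
  have nm: "\<not> (ordp e i m \<and> ordp e m j)" if "m \<noteq> i" "m \<noteq> j" for m
  proof
    assume o: "ordp e i m \<and> ordp e m j"
    show False
    proof (cases "j = Suc i")
      case True
      then have "e j" using h by auto
      have "m < i \<or> m > j" using that True by auto
      then consider "m < i" | "m > j" by blast
      then show False
      proof cases
        case 1
        then have "Dn e m i" "Up e m j" using o ordp_ge ordp_le True by auto
        then have "Up e m i" using Up_sub[of m m i j e] True by auto
        then show False using 1 \<open>Dn e m i\<close> Up_Dn by blast
      next
        case 2
        then have "Up e i m" "Dn e j m" using o ordp_ge ordp_le True by auto
        then have "Up e j m" using Up_sub[of i j m m e] True by auto
        then show False using 2 \<open>Dn e j m\<close> Up_Dn by blast
      qed
    next
      case False
      then have ij: "i = Suc j" "\<not> e i" using h by auto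
      have "m < j \<or> m > i" using that ij by auto
      then consider "m < j" | "m > i" by blast
      then show False
      proof cases
        case 1
        then have "Dn e m i" "Up e m j" using o ordp_ge ordp_le ij by auto
        then have "Dn e m j" using Dn_sub[of m m j i e] ij by auto
        then show False using 1 \<open>Up e m j\<close> Up_Dn by blast
      next
        case 2
        then have "Up e i m" "Dn e j m" using o ordp_ge ordp_le ij by auto
        then have "Dn e i m" using Dn_sub[of j i m m e] ij by auto
        then show False using 2 \<open>Up e i m\<close> Up_Dn by blast
      qed
    qed
  qed
  show "ordp e i j \<and> i \<noteq> j \<and> \<not> (\<exists>m<L. m \<noteq> i \<and> m \<noteq> j \<and> ordp e i m \<and> ordp e m j)"
    using h nm ordp_Suc ordp_Suc2 by auto
qed

text \<open>source flip at j\<close>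
locale src =
  fixes e :: "nat \<Rightarrow> bool" and j k :: nat
  assumes j1: "1 \<le> j" and jk: "j \<le> k" and nej: "\<not> e j" and nxt: "j < k \<Longrightarrow> e (Suc j)"
begin
definition "e' = e(j := True, Suc j := False)"

lemma e'_other: "m \<noteq> j \<Longrightarrow> m \<noteq> Suc j \<Longrightarrow> e' m = e m"
  unfolding e'_def by auto
lemma e'_j: "e' j" and e'_Sj: "\<not> e' (Suc j)" unfolding e'_def by auto

lemma a: "i \<le> k \<Longrightarrow> l \<le> k \<Longrightarrow> i \<noteq> j \<Longrightarrow> l \<noteq> j \<Longrightarrow> ordp e' i l = ordp e i l"
proof -
  assume ik: "i \<le> k" and lk: "l \<le> k" and ij: "i \<noteq> j" and lj: "l \<noteq> j"
  show ?thesis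
  proof (cases "i \<le> l")
    case True
    have "Up e' i l = Up e i l"
    proof (cases "l < j \<or> j < i")
      case True
      then show ?thesis by (intro Up_cong) (auto intro!: e'_other)
    next
      case False
      then have "i < j" "j < l" using ij lj by auto
      have sj: "Suc (j-1) = j" using j1 by auto
      have "\<not> Up e i l"
      proof
        assume "Up e i l" then have "Up e (j-1) (Suc (j-1))" using Up_sub[of i "j-1" "Suc (j-1)" l e] \<open>i < j\<close> \<open>j < l\<close> sj by auto
        then show False using Up_Suc[of e "j-1"] sj nej by auto
      qed
      moreover have "\<not> Up e' i l"
      proof
        assume "Up e' i l" then have "Up e' j (Suc j)" using Up_sub[of i j "Suc j" l e'] \<open>i < j\<close> \<open>j < l\<close> by auto
        then show False using Up_Suc[of e' j] e'_Sj by auto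
      qed
      ultimately show ?thesis by auto
    qed
    then show ?thesis using True ordp_le by auto
  next
    case False
    have "Dn e' l i = Dn e l i"
    proof (cases "i < j \<or> j < l")
      case True
      then show ?thesis by (intro Dn_cong) (auto intro!: e'_other)
    next
      case False
      then have "l < j" "j < i" using ij lj by auto
      have sj: "Suc (j-1) = j" using j1 by auto
      have "\<not> Dn e l i"
      proof
        assume "Dn e l i" then have "Dn e j (Suc j)" using Dn_sub[of l j "Suc j" i e] \<open>l < j\<close> \<open>j < i\<close> by auto
        then show False using Dn_Suc[of e j] nxt \<open>j < i\<close> ik by auto
      qed
      moreover have "\<not> Dn e' l i"
      proof
        assume "Dn e' l i" then have "Dn e' (j-1) (Suc (j-1))" using Dn_sub[of l "j-1" "Suc (j-1)" i e'] \<open>l < j\<close> \<open>j < i\<close> sj by auto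
        then show False using Dn_Suc[of e' "j-1"] sj e'_j by auto
      qed
      ultimately show ?thesis by auto
    qed
    then show ?thesis using False ordp_ge by auto
  qed
qed

lemma b: "i \<le> k \<Longrightarrow> i \<noteq> j \<Longrightarrow>
  (if ordp e i (j-1) then 1 else 0) + (if j < k then (if ordp e i (Suc j) then 1 else 0) else 0) - (if ordp e i j then 1 else 0)
   = (if ordp e' i j then (1::int) else 0)"
proof -
  assume ik: "i \<le> k" and ij: "i \<noteq> j"
  show ?thesis
  proof (cases "i < j")
    case True
    have 1: "\<not> ordp e i j" using True nej ordp_le[of i j e] unfolding Up_def by auto
    have 2: "\<not> ordp e i (Suc j)" using True nej ordp_le[of i "Suc j" e] unfolding Up_def by auto
    have 3: "ordp e i (j - 1) = Up e i (j - 1)" using True ordp_le by auto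
    have 4: "ordp e' i j = Up e' i j" using True ordp_le by auto
    have 5: "Up e' i j = (Up e' i (j-1) \<and> Up e' (j-1) j)" using True Up_split[of i "j-1" j e'] by auto
    have 6: "Up e' (j-1) j" using e'_j Up_Suc[of e' "j-1"] j1 by auto
    have 7: "Up e' i (j-1) = Up e i (j-1)" by (intro Up_cong) (auto intro!: e'_other)
    show ?thesis using 1 2 3 4 5 6 7 by auto
  next
    case False
    then have ji: "j < i" using ij by auto
    then have jk': "j < k" using ik by auto
    then have ej: "e (Suc j)" using nxt by auto
    have 1: "\<not> ordp e i j" using ji ej ordp_ge[of j i e] unfolding Dn_def by auto
    have 2: "\<not> ordp e i (j-1)"
    proof
      assume "ordp e i (j-1)"
      then have "Dn e (j-1) i" using ji ordp_ge[of "j-1" i e] by auto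
      then have "Dn e j (Suc j)" using Dn_sub[of "j-1" j "Suc j" i e] ji by auto
      then show False using Dn_Suc ej by auto
    qed
    have 3: "ordp e i (Suc j) = Dn e (Suc j) i" using ji ordp_ge by auto
    have 4: "ordp e' i j = Dn e' j i" using ji ordp_ge by auto
    have 5: "Dn e' j i = (Dn e' j (Suc j) \<and> Dn e' (Suc j) i)" using ji Dn_split[of j "Suc j" i e'] by auto
    have 6: "Dn e' j (Suc j)" using e'_Sj Dn_Suc by auto
    have 7: "Dn e' (Suc j) i = Dn e (Suc j) i" by (intro Dn_cong) (auto intro!: e'_other)
    show ?thesis using 1 2 3 4 5 6 7 jk' by auto
  qed
qed

lemma c: "i \<le> k \<Longrightarrow> i \<noteq> j \<Longrightarrow>
  (if ordp e (j-1) i then 1 else 0) + (if j < k then (if ordp e (Suc j) i then 1 else 0) else 0) - (if ordp e j i then 1 else 0)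
   = (if ordp e' j i then (1::int) else 0)"
proof -
  assume ik: "i \<le> k" and ij: "i \<noteq> j"
  have sj: "Suc (j-1) = j" using j1 by auto
  show ?thesis
  proof (cases "i < j")
    case True
    have h1: "ordp e j i = Dn e i (j-1)" using True ordp_ge[of i j e] Dn_split[of i "j-1" j e] Dn_Suc[of e "j-1"] nej sj by auto
    have h3: "ordp e (j - 1) i = Dn e i (j - 1)" using True ordp_ge by auto
    have h2: "j < k \<Longrightarrow> \<not> ordp e (Suc j) i" using True ordp_ge[of i "Suc j" e] Dn_split[of i j "Suc j" e] Dn_Suc[of e j] nxt by auto
    have h4: "\<not> ordp e' j i" using True ordp_ge[of i j e'] Dn_split[of i "j-1" j e'] Dn_Suc[of e' "j-1"] e'_j sj by auto
    show ?thesis using h1 h2 h3 h4 by auto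
  next
    case False
    then have ji: "j < i" using ij by auto
    then have jk': "j < k" using ik by auto
    then have ej: "e (Suc j)" using nxt by auto
    have h2: "\<not> ordp e (j-1) i" using ji ordp_le[of "j-1" i e] Up_split[of "j-1" j i e] Up_Suc[of e "j-1"] nej sj by auto
    have h1: "ordp e j i = Up e (Suc j) i" using ji ordp_le[of j i e] Up_split[of j "Suc j" i e] Up_Suc[of e j] ej by auto
    have h3: "ordp e (Suc j) i = Up e (Suc j) i" using ji ordp_le by auto
    have h4: "\<not> ordp e' j i" using ji ordp_le[of j i e'] Up_split[of j "Suc j" i e'] Up_Suc[of e' j] e'_Sj by auto
    show ?thesis using h1 h2 h3 h4 jk' by auto
  qed
qed
end




lemma hasse_le: "hasse J x y \<Longrightarrow> J x y" by (simp add: hasse_def)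

lemma poset_rtrancl_hasse:
  fixes J :: "'n::finite \<Rightarrow> 'n \<Rightarrow> bool"
  assumes P: "is_poset J"
  shows "J x y \<Longrightarrow> (hasse J)\<^sup>*\<^sup>* x y"
proof -
  have A: "\<And>x y. J x y \<Longrightarrow> J y x \<Longrightarrow> x = y" using P unfolding is_poset_def by blast
  have Tr: "\<And>x y z. J x y \<Longrightarrow> J y z \<Longrightarrow> J x z" using P unfolding is_poset_def by blast
  have R: "\<And>x. J x x" using P unfolding is_poset_def by blast
  have "\<forall>x y. card {z. J x z \<and> J z y} = n \<longrightarrow> J x y \<longrightarrow> (hasse J)\<^sup>*\<^sup>* x y" for n
  proof (induction n rule: less_induct)
    case (less n)
    show ?case
    proof (intro allI impI)
      fix x y assume cn: "card {z. J x z \<and> J z y} = n" and xy: "J x y"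
      show "(hasse J)\<^sup>*\<^sup>* x y"
      proof (cases "hasse J x y \<or> x = y")
        case True then show ?thesis by auto
      next
        case False
        then obtain k where k: "k \<noteq> x" "k \<noteq> y" "J x k" "J k y" using xy unfolding hasse_def by auto
        have s1: "{z. J x z \<and> J z k} \<subset> {z. J x z \<and> J z y}"
        proof
          show "{z. J x z \<and> J z k} \<subseteq> {z. J x z \<and> J z y}" using Tr k by blast
          have "y \<notin> {z. J x z \<and> J z k}" using A k by blast
          moreover have "y \<in> {z. J x z \<and> J z y}" using R xy by blast
          ultimately show "{z. J x z \<and> J z k} \<noteq> {z. J x z \<and> J z y}" by blast
        qed
        have s2: "{z. J k z \<and> J z y} \<subset> {z. J x z \<and> J z y}"
        proof
          show "{z. J k z \<and> J z y} \<subseteq> {z. J x z \<and> J z y}" using Tr k by blast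
          have "x \<notin> {z. J k z \<and> J z y}" using A k by blast
          moreover have "x \<in> {z. J x z \<and> J z y}" using R xy by blast
          ultimately show "{z. J k z \<and> J z y} \<noteq> {z. J x z \<and> J z y}" by blast
        qed
        have c1: "card {z. J x z \<and> J z k} < n" using psubset_card_mono[OF _ s1] cn by auto
        have c2: "card {z. J k z \<and> J z y} < n" using psubset_card_mono[OF _ s2] cn by auto
        have "(hasse J)\<^sup>*\<^sup>* x k" using less.IH[OF c1, rule_format, OF refl k(3)] .
        moreover have "(hasse J)\<^sup>*\<^sup>* k y" using less.IH[OF c2, rule_format, OF refl k(4)] .
        ultimately show ?thesis by (rule rtranclp_trans)
      qed
    qed
  qed
  from this[of "card {z. J x z \<and> J z y}"] show "J x y \<Longrightarrow> (hasse J)\<^sup>*\<^sup>* x y" by simp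
qed

lemma rtrancl_map:
  assumes "r\<^sup>*\<^sup>* x y" and "\<And>a b. r a b \<Longrightarrow> f a = f b \<or> s (f a) (f b)"
  shows "s\<^sup>*\<^sup>* (f x) (f y)"
  using assms(1)
proof induction
  case base then show ?case by simp
next
  case (step y z) then show ?case using assms(2)[of y z] by (metis rtranclp.rtrancl_into_rtrancl)
qed

lemma rtrancl_refl_trans:
  assumes "s\<^sup>*\<^sup>* a b" and "\<And>x. s x x" and "\<And>x y z. s x y \<Longrightarrow> s y z \<Longrightarrow> s x z"
  shows "s a b"
  using assms(1) by induction (use assms in blast)+

lemma poset_rtrancl_le: "is_poset J \<Longrightarrow> (hasse J)\<^sup>*\<^sup>* x y \<Longrightarrow> J x y"
proof -
  assume P: "is_poset J" and h: "(hasse J)\<^sup>*\<^sup>* x y"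
  have Tr: "\<And>x y z. J x y \<Longrightarrow> J y z \<Longrightarrow> J x z" using P unfolding is_poset_def by blast
  have R: "\<And>x. J x x" using P unfolding is_poset_def by blast
  from h show ?thesis
  proof (induction rule: rtranclp_induct)
    case base then show ?case using R by simp
  next
    case (step y z) then show ?case using Tr[of x y z] hasse_le[of J y z] by simp
  qed
qed

lemma hadj_sym: "hadj J u v = hadj J v u" unfolding hadj_def by auto
lemma hadj_irrefl: "\<not> hadj J u u" unfolding hadj_def hasse_def by auto

lemma rtranclp_ordp: "(ordp e)\<^sup>*\<^sup>* a b \<Longrightarrow> ordp e a b"
  apply (induction rule: rtranclp_induct)
   apply simp
  using ordp_trans by blast

definition idx :: "'a list \<Rightarrow> 'a \<Rightarrow> nat" where "idx xs x = (THE i. i < length xs \<and> xs ! i = x)"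

lemma idx_nth: "distinct xs \<Longrightarrow> i < length xs \<Longrightarrow> idx xs (xs ! i) = i"
  unfolding idx_def by (rule the_equality) (auto simp: nth_eq_iff_index_eq)

lemma nth_idx: "distinct xs \<Longrightarrow> x \<in> set xs \<Longrightarrow> idx xs x < length xs \<and> xs ! idx xs x = x"
  by (metis idx_nth in_set_conv_nth)

definition posn :: "'a list \<Rightarrow> 'a \<Rightarrow> nat" where "posn xs x = (if x \<in> set xs then idx xs x else 0)"
definition piT :: "'a \<Rightarrow> 'a list \<Rightarrow> 'a \<Rightarrow> 'a" where "piT p xs x = (if x \<in> set xs \<and> x \<noteq> p then p else x)"
definition Pm :: "('a \<Rightarrow> 'a \<Rightarrow> bool) \<Rightarrow> 'a \<Rightarrow> 'a list \<Rightarrow> (nat \<Rightarrow> bool) \<Rightarrow> 'a \<Rightarrow> 'a \<Rightarrow> bool" where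
  "Pm J p xs e x y \<longleftrightarrow> ordp e (posn xs x) (posn xs y) \<and> J (piT p xs x) (piT p xs y)"
definition Cm :: "('n::finite \<Rightarrow> 'n \<Rightarrow> bool) \<Rightarrow> 'n \<Rightarrow> 'n list \<Rightarrow> (nat \<Rightarrow> bool) \<Rightarrow> int^'n^'n" where
  "Cm J p xs e = (\<chi> x y. if Pm J p xs e x y then 1 else 0)"
definition eJ :: "('a \<Rightarrow> 'a \<Rightarrow> bool) \<Rightarrow> 'a list \<Rightarrow> nat \<Rightarrow> bool" where
  "eJ J xs m = J (xs ! (m - 1)) (xs ! m)"

lemma incmat_Pm: "incmat (Pm J p xs e) = Cm J p xs e"
  unfolding incmat_def Cm_def by simp

locale AP =
  fixes J :: "'n::finite \<Rightarrow> 'n \<Rightarrow> bool" and p :: 'n and xs :: "'n list"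
  assumes pos: "is_poset J"
    and dist: "distinct xs" and x0: "xs ! 0 = p" and len: "2 \<le> length xs"
    and adj: "\<And>u v. u \<in> set xs \<Longrightarrow> v \<in> set xs \<Longrightarrow> hadj J u v \<longleftrightarrow> (\<exists>i. Suc i < length xs \<and> {xs!i, xs!Suc i} = {u,v})"
    and comp: "\<And>t y. t \<in> set xs \<Longrightarrow> t \<noteq> p \<Longrightarrow> hadj J t y \<Longrightarrow> y \<in> set xs"
begin

lemma refl: "J x x" using pos unfolding is_poset_def by blast
lemma antisym: "J x y \<Longrightarrow> J y x \<Longrightarrow> x = y" using pos unfolding is_poset_def by blast
lemma trans: "J x y \<Longrightarrow> J y z \<Longrightarrow> J x z" using pos unfolding is_poset_def by blast

lemma len0: "0 < length xs" using len by auto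
lemma p_in: "p \<in> set xs" using nth_mem[OF len0] x0 by auto
lemma idx_p: "idx xs p = 0" using idx_nth[OF dist len0] x0 by auto
lemma posn_p[simp]: "posn xs p = 0" using idx_p p_in unfolding posn_def by auto
lemma posn_out: "x \<notin> set xs \<Longrightarrow> posn xs x = 0" unfolding posn_def by auto
lemma posn_nth[simp]: "i < length xs \<Longrightarrow> posn xs (xs ! i) = i" unfolding posn_def using idx_nth[OF dist] by auto
lemma posn_lt: "posn xs x < length xs" unfolding posn_def using nth_idx[OF dist] len by auto
lemma nth_posn: "x \<in> set xs \<Longrightarrow> xs ! posn xs x = x" unfolding posn_def using nth_idx[OF dist] by auto
lemma posn_T: "x \<in> set xs \<Longrightarrow> x \<noteq> p \<Longrightarrow> posn xs x \<noteq> 0"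
proof
  assume "x \<in> set xs" "x \<noteq> p" "posn xs x = 0"
  then have "xs ! 0 = x" using nth_posn[of x] by simp
  then show False using x0 \<open>x \<noteq> p\<close> by simp
qed
lemma posn_0: "posn xs x = 0 \<Longrightarrow> x \<notin> set xs \<or> x = p" using posn_T by metis
lemma piT_notT: "\<not> (piT p xs x \<in> set xs \<and> piT p xs x \<noteq> p)" unfolding piT_def by auto
lemma piT_id: "\<not> (x \<in> set xs \<and> x \<noteq> p) \<Longrightarrow> piT p xs x = x" unfolding piT_def by auto
lemma piT_T: "x \<in> set xs \<Longrightarrow> piT p xs x = p" unfolding piT_def by auto

lemma rtranclp_J: "J\<^sup>*\<^sup>* a b \<Longrightarrow> J a b"
  apply (induction rule: rtranclp_induct)
   apply (simp add: refl)
  using trans by blast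

lemma chain_up: "i \<le> j \<Longrightarrow> j < length xs \<Longrightarrow> Up (eJ J xs) i j \<Longrightarrow> J (xs ! i) (xs ! j)"
proof (induction j)
  case 0 then show ?case using refl by auto
next
  case (Suc j)
  show ?case
  proof (cases "i = Suc j")
    case True then show ?thesis using refl by auto
  next
    case False
    then have "i \<le> j" using Suc by auto
    then have u: "Up (eJ J xs) i j" "eJ J xs (Suc j)" using Suc.prems Up_split[of i j "Suc j"] Up_Suc by auto
    have ij: "J (xs ! i) (xs ! j)" using Suc.IH[OF \<open>i \<le> j\<close> _ u(1)] Suc.prems(2) by simp
    show ?thesis using trans[OF ij] u(2) unfolding eJ_def by simp
  qed
qed

lemma chain_dn: "i \<le> j \<Longrightarrow> j < length xs \<Longrightarrow> Dn (eJ J xs) i j \<Longrightarrow> J (xs ! j) (xs ! i)"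
proof (induction j)
  case 0 then show ?case using refl by auto
next
  case (Suc j)
  show ?case
  proof (cases "i = Suc j")
    case True then show ?thesis using refl by auto
  next
    case False
    then have "i \<le> j" using Suc by auto
    then have "Dn (eJ J xs) i j" "\<not> eJ J xs (Suc j)" using Suc.prems Dn_split[of i j "Suc j"] Dn_Suc by auto
    moreover have "J (xs ! Suc j) (xs ! j) \<or> xs ! Suc j = xs ! j"
    proof -
      have "hadj J (xs ! j) (xs ! Suc j)" using adj[of "xs ! j" "xs ! Suc j"] Suc.prems by auto
      then show ?thesis using \<open>\<not> eJ J xs (Suc j)\<close> unfolding eJ_def hadj_def hasse_def by auto
    qed
    moreover have "J (xs ! j) (xs ! i)" using Suc.IH[OF \<open>i \<le> j\<close> _ calculation(1)] Suc.prems(2) by simp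
    ultimately show ?thesis using trans[of "xs ! Suc j" "xs ! j" "xs ! i"] by auto
  qed
qed

lemma chain: "ordp (eJ J xs) i j \<Longrightarrow> i < length xs \<Longrightarrow> j < length xs \<Longrightarrow> J (xs ! i) (xs ! j)"
proof (cases "i \<le> j")
  case True
  assume "ordp (eJ J xs) i j" "i < length xs" "j < length xs"
  then show ?thesis using chain_up[of i j] True ordp_le by simp
next
  case False
  assume "ordp (eJ J xs) i j" "i < length xs" "j < length xs"
  then show ?thesis using chain_dn[of j i] False ordp_ge by simp
qed

lemma edge_cases: "hasse J a b \<Longrightarrow> a \<in> set xs \<Longrightarrow> b \<in> set xs \<Longrightarrow>
   \<exists>i. Suc i < length xs \<and> ((a = xs ! i \<and> b = xs ! Suc i) \<or> (a = xs ! Suc i \<and> b = xs ! i))"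
proof -
  assume h: "hasse J a b" "a \<in> set xs" "b \<in> set xs"
  have "hadj J a b" using h(1) unfolding hadj_def by simp
  then obtain i where i: "Suc i < length xs" "{xs!i, xs!Suc i} = {a,b}" using adj[OF h(2) h(3)] by blast
  then have "(a = xs ! i \<and> b = xs ! Suc i) \<or> (a = xs ! Suc i \<and> b = xs ! i)" unfolding doubleton_eq_iff by blast
  then show ?thesis using i(1) by blast
qed

lemma pos_mono: "J x y \<Longrightarrow> ordp (eJ J xs) (posn xs x) (posn xs y)"
proof -
  assume "J x y"
  then have "(hasse J)\<^sup>*\<^sup>* x y" by (rule poset_rtrancl_hasse[OF pos])
  then have "(ordp (eJ J xs))\<^sup>*\<^sup>* (posn xs x) (posn xs y)"
  proof (rule rtrancl_map)
    fix a b assume h: "hasse J a b"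
    show "posn xs a = posn xs b \<or> ordp (eJ J xs) (posn xs a) (posn xs b)"
    proof (cases "a \<in> set xs \<and> b \<in> set xs")
      case True
      then obtain i where i: "Suc i < length xs" "(a = xs ! i \<and> b = xs ! Suc i) \<or> (a = xs ! Suc i \<and> b = xs ! i)"
        using edge_cases h by blast
      then show ?thesis
      proof (elim disjE)
        assume "a = xs ! i \<and> b = xs ! Suc i"
        then show ?thesis using h i(1) ordp_Suc unfolding eJ_def hasse_def by auto
      next
        assume ab: "a = xs ! Suc i \<and> b = xs ! i"
        then have "\<not> J b a" using h antisym unfolding hasse_def by blast
        then show ?thesis using ab i(1) ordp_Suc2 unfolding eJ_def by auto
      qed
    next
      case False
      have ha: "hadj J a b" "hadj J b a" using h unfolding hadj_def by auto
      have "a \<notin> set xs \<or> a = p" using False comp ha by blast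
      moreover have "b \<notin> set xs \<or> b = p" using False comp ha by blast
      ultimately show ?thesis using posn_out by auto
    qed
  qed
  then show ?thesis by (rule rtranclp_ordp)
qed

lemma pi_mono: "J x y \<Longrightarrow> J (piT p xs x) (piT p xs y)"
proof -
  assume "J x y"
  then have "(hasse J)\<^sup>*\<^sup>* x y" by (rule poset_rtrancl_hasse[OF pos])
  then have "J\<^sup>*\<^sup>* (piT p xs x) (piT p xs y)"
  proof (rule rtrancl_map)
    fix a b assume h: "hasse J a b"
    have ha: "hadj J a b" "hadj J b a" using h unfolding hadj_def by auto
    show "piT p xs a = piT p xs b \<or> J (piT p xs a) (piT p xs b)"
    proof (cases "a \<in> set xs \<and> a \<noteq> p")
      case True
      then have "b \<in> set xs" using comp ha by blast
      then show ?thesis using True unfolding piT_def by auto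
    next
      case False
      show ?thesis
      proof (cases "b \<in> set xs \<and> b \<noteq> p")
        case True
        then have "a \<in> set xs" using comp ha by blast
        then show ?thesis using True False unfolding piT_def by auto
      next
        case False2: False
        then show ?thesis using hasse_le[OF h] piT_id[OF False] piT_id[OF False2] by auto
      qed
    qed
  qed
  then show ?thesis by (rule rtranclp_J)
qed

lemma J_eq_Pm: "J x y \<longleftrightarrow> Pm J p xs (eJ J xs) x y"
proof
  assume a: "J x y" then show "Pm J p xs (eJ J xs) x y" unfolding Pm_def using pos_mono[OF a] pi_mono[OF a] by simp
next
  assume h: "Pm J p xs (eJ J xs) x y"
  then have o: "J (xs ! posn xs x) (xs ! posn xs y)" and q: "J (piT p xs x) (piT p xs y)"
    using chain[OF _ posn_lt posn_lt] h unfolding Pm_def by auto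
  have T: "z \<in> set xs \<and> z \<noteq> p \<Longrightarrow> xs ! posn xs z = z \<and> piT p xs z = p" for z
    using nth_posn piT_T by auto
  have N: "\<not> (z \<in> set xs \<and> z \<noteq> p) \<Longrightarrow> xs ! posn xs z = p \<and> piT p xs z = z" for z
  proof -
    assume a: "\<not> (z \<in> set xs \<and> z \<noteq> p)"
    then have "posn xs z = 0" using posn_out posn_p by (cases "z \<in> set xs") auto
    then show ?thesis using piT_id[OF a] x0 by simp
  qed
  show "J x y"
  proof (cases "x \<in> set xs \<and> x \<noteq> p")
    case True note tx = T[OF True]
    show ?thesis
    proof (cases "y \<in> set xs \<and> y \<noteq> p")
      case True then show ?thesis using tx T o by auto
    next
      case False then show ?thesis using tx N[OF False] o q trans[of x p y] by simp
    qed
  next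
    case False note nx = N[OF False]
    show ?thesis
    proof (cases "y \<in> set xs \<and> y \<noteq> p")
      case True then show ?thesis using nx T[OF True] o q trans[of x p y] by simp
    next
      case False then show ?thesis using nx N[OF False] q by auto
    qed
  qed
qed

end



definition mcong :: "int^'n^'n \<Rightarrow> int^'n^'n \<Rightarrow> bool" where
  "mcong C D \<longleftrightarrow> (\<exists>B B'. B ** B' = mat 1 \<and> B' ** B = mat 1 \<and> D = transpose B ** C ** B)"

lemma mcong_refl: "mcong C C"
  unfolding mcong_def by (rule exI[of _ "mat 1"], rule exI[of _ "mat 1"]) simp

lemma mcong_sym: "mcong C D \<Longrightarrow> mcong D C"
  unfolding mcong_def
proof (elim exE conjE)
  fix B B' assume h: "B ** B' = mat 1" "B' ** B = mat 1" "D = transpose B ** C ** B"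
  have "transpose B' ** D ** B' = (transpose B' ** transpose B) ** C ** (B ** B')" using h(3) by (simp add: matrix_mul_assoc)
  also have "\<dots> = transpose (B ** B') ** C ** (B ** B')" by (simp add: matrix_transpose_mul)
  also have "\<dots> = C" using h(1) by simp
  finally show "\<exists>B B'. B ** B' = mat 1 \<and> B' ** B = mat 1 \<and> C = transpose B ** D ** B" using h by metis
qed

lemma mcong_trans: "mcong C D \<Longrightarrow> mcong D E \<Longrightarrow> mcong C E"
  unfolding mcong_def
proof (elim exE conjE)
  fix B B' A A' assume h: "B ** B' = mat 1" "B' ** B = mat 1" "D = transpose B ** C ** B"
    and g: "A ** A' = mat 1" "A' ** A = mat 1" "E = transpose A ** D ** A"
  have "E = transpose (B ** A) ** C ** (B ** A)" using h(3) g(3) by (simp add: matrix_mul_assoc matrix_transpose_mul)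
  moreover have "(B ** A) ** (A' ** B') = mat 1"
  proof -
    have "(B ** A) ** (A' ** B') = B ** (A ** A') ** B'" by (simp add: matrix_mul_assoc)
    then show ?thesis using g(1) h(1) by simp
  qed
  moreover have "(A' ** B') ** (B ** A) = mat 1"
  proof -
    have "(A' ** B') ** (B ** A) = A' ** (B' ** B) ** A" by (simp add: matrix_mul_assoc)
    then show ?thesis using g(2) h(2) by simp
  qed
  ultimately show "\<exists>B B'. B ** B' = mat 1 \<and> B' ** B = mat 1 \<and> E = transpose B ** C ** B" by metis
qed

context AP
begin

lemma reflect:
  assumes j1: "1 \<le> j" and jk: "j \<le> length xs - 1" and nej: "\<not> e j" and nxt: "j < length xs - 1 \<Longrightarrow> e (Suc j)"
  shows "mcong (Cm J p xs e) (Cm J p xs (e(j := True, Suc j := False)))"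
proof -
  interpret S: src e j "length xs - 1" using assms by unfold_locales auto
  define k where "k = length xs - 1"
  define v where "v = xs ! j"
  define c1 where "c1 = xs ! (j - 1)"
  define c2 where "c2 = xs ! Suc j"
  define w :: "'n \<Rightarrow> int" where "w a = (if a = c1 then 1 else 0) + (if j < k \<and> a = c2 then 1 else 0) - (if a = v then 1 else 0)" for a
  define Bm :: "int^'n^'n" where "Bm = (\<chi> a b. if b = v then w a else (if a = b then 1 else 0))"
  define Op :: "'n \<Rightarrow> ('n \<Rightarrow> int) \<Rightarrow> int" where "Op z f = (if z = v then f c1 + (if j < k then f c2 else 0) - f v else f z)" for z f
  have jl: "j < length xs" using jk len unfolding k_def by auto
  have j1l: "j - 1 < length xs" using jl by auto
  have v1: "v \<noteq> c1" unfolding v_def c1_def using dist jl j1 j1l nth_eq_iff_index_eq by fastforce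
  have v2: "j < k \<Longrightarrow> v \<noteq> c2" unfolding v_def c2_def k_def using dist jl nth_eq_iff_index_eq by fastforce
  have v12: "j < k \<Longrightarrow> c1 \<noteq> c2" unfolding c1_def c2_def k_def using dist jl j1l nth_eq_iff_index_eq by fastforce
  have pv: "posn xs v = j" unfolding v_def using jl by simp
  have pc1: "posn xs c1 = j - 1" unfolding c1_def using j1l by simp
  have pc2: "j < k \<Longrightarrow> posn xs c2 = Suc j" unfolding c2_def k_def by simp
  have iv: "piT p xs v = p" unfolding v_def using piT_T jl by simp
  have ic1: "piT p xs c1 = p" unfolding c1_def using piT_T j1l by simp
  have ic2: "j < k \<Longrightarrow> piT p xs c2 = p" unfolding c2_def k_def using piT_T by simp
  have sum_col: "(\<Sum>a\<in>UNIV. Bm $ a $ z * f a) = Op z f" for z f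
  proof (cases "z = v")
    case True
    have eq: "Bm $ a $ v * f a = (if a = c1 then f a else 0) + (if j < k then (if a = c2 then f a else 0) else 0) - (if a = v then f a else 0)" for a
      unfolding Bm_def w_def by (auto simp: algebra_simps)
    show ?thesis unfolding True Op_def by (simp add: eq sum.distrib sum_subtractf)
  next
    case False
    have eq: "Bm $ a $ z * f a = (if a = z then f a else 0)" for a
      using False unfolding Bm_def by auto
    show ?thesis using False unfolding Op_def by (simp add: eq)
  qed
  have entry: "(transpose Bm ** C ** Bm) $ x $ y = Op y (\<lambda>b. Op x (\<lambda>a. C $ a $ b))" for C x y
  proof -
    have 1: "(transpose Bm ** C) $ x $ b = Op x (\<lambda>a. C $ a $ b)" for b
      using sum_col[of x "\<lambda>a. C $ a $ b"] by (simp add: matrix_matrix_mult_def transpose_def)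
    have "(transpose Bm ** C ** Bm) $ x $ y = (\<Sum>b\<in>UNIV. Bm $ b $ y * (transpose Bm ** C) $ x $ b)"
      by (simp add: matrix_matrix_mult_def mult.commute)
    then show ?thesis using sum_col[of y "\<lambda>b. (transpose Bm ** C) $ x $ b"] 1 by simp
  qed
  have inv: "Bm ** Bm = mat 1"
  proof -
    have "(Bm ** Bm) $ a $ b = mat 1 $ a $ b" for a b
    proof -
      have "(Bm ** Bm) $ a $ b = (\<Sum>c\<in>UNIV. Bm $ c $ b * Bm $ a $ c)" by (simp add: matrix_matrix_mult_def mult.commute)
      also have "\<dots> = Op b (\<lambda>c. Bm $ a $ c)" by (rule sum_col)
      also have "\<dots> = mat 1 $ a $ b"
        using v1 v2 unfolding Op_def Bm_def w_def mat_def by auto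
      finally show ?thesis .
    qed
    then show ?thesis by (simp add: vec_eq_iff)
  qed
  have CE: "Cm J p xs e' $ a $ b = (if ordp e' (posn xs a) (posn xs b) then 1 else 0) * (if J (piT p xs a) (piT p xs b) then 1 else 0)" for e' a b
    unfolding Cm_def Pm_def by simp
  have pj: "posn xs x = j \<longleftrightarrow> x = v" for x
  proof
    assume "posn xs x = j"
    then have "x \<in> set xs" using posn_out j1 by fastforce
    then show "x = v" using nth_posn \<open>posn xs x = j\<close> unfolding v_def by metis
  qed (simp add: pv)
  have pk: "posn xs x \<le> length xs - 1" for x using posn_lt[of x] by auto
  have main: "(transpose Bm ** Cm J p xs e ** Bm) $ x $ y = Cm J p xs S.e' $ x $ y" for x y
  proof (cases "x = v")
    case xv: True
    show ?thesis
    proof (cases "y = v")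
      case yv: True
      have o1: "j < k \<Longrightarrow> \<not> ordp e (Suc j) (j-1)"
      proof
        assume "j < k" "ordp e (Suc j) (j-1)"
        then have "Dn e (j-1) (Suc j)" using ordp_ge by auto
        then have "Dn e j (Suc j)" using Dn_sub[of "j-1" j "Suc j" "Suc j" e] by auto
        then show False using Dn_Suc nxt \<open>j < k\<close> unfolding k_def by auto
      qed
      have o2: "\<not> ordp e (j-1) (Suc j)"
      proof
        assume "ordp e (j-1) (Suc j)"
        then have "Up e (j-1) (Suc j)" using ordp_le by auto
        then have "Up e (j-1) (Suc (j-1))" using Up_sub[of "j-1" "j-1" "Suc (j-1)" "Suc j" e] j1 by auto
        then show False using Up_Suc[of e "j-1"] nej j1 by auto
      qed
      have o3: "ordp e j (j-1)" using ordp_Suc2[of e "j-1"] nej j1 by auto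
      have o4: "\<not> ordp e (j-1) j" using ordp_Suc[of e "j-1"] nej j1 by auto
      have o5: "j < k \<Longrightarrow> ordp e j (Suc j)" using ordp_Suc[of e j] nxt unfolding k_def by auto
      have o6: "j < k \<Longrightarrow> \<not> ordp e (Suc j) j" using ordp_Suc2[of e j] nxt unfolding k_def by auto
      show ?thesis
      proof (cases "j < k")
        case True
        then show ?thesis using xv yv v1 v2 v12 o1 o2 o3 o4 o5 o6 refl
          unfolding entry Op_def CE by (simp add: pv pc1 pc2 iv ic1 ic2)
      next
        case False
        then show ?thesis using xv yv v1 o2 o3 o4 refl
          unfolding entry Op_def CE by (simp add: pv pc1 iv ic1)
      qed
    next
      case yv: False
      have c: "(if ordp e (j-1) (posn xs y) then 1 else 0) + (if j < k then (if ordp e (Suc j) (posn xs y) then 1 else 0) else 0) - (if ordp e j (posn xs y) then 1 else 0)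
         = (if ordp S.e' j (posn xs y) then (1::int) else 0)"
        using S.c[of "posn xs y"] pk pj yv unfolding k_def by auto
      show ?thesis
      proof (cases "j < k")
        case True
        then show ?thesis using xv yv v1 v2 c
          unfolding entry Op_def CE by (cases "J p (piT p xs y)") (simp_all add: pv pc1 pc2 iv ic1 ic2)
      next
        case False
        then show ?thesis using xv yv v1 c
          unfolding entry Op_def CE by (cases "J p (piT p xs y)") (simp_all add: pv pc1 iv ic1)
      qed
    qed
  next
    case xv: False
    show ?thesis
    proof (cases "y = v")
      case yv: True
      have b: "(if ordp e (posn xs x) (j-1) then 1 else 0) + (if j < k then (if ordp e (posn xs x) (Suc j) then 1 else 0) else 0) - (if ordp e (posn xs x) j then 1 else 0)
         = (if ordp S.e' (posn xs x) j then (1::int) else 0)"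
        using S.b[of "posn xs x"] pk pj xv unfolding k_def by auto
      show ?thesis
      proof (cases "j < k")
        case True
        then show ?thesis using xv yv v1 v2 b
          unfolding entry Op_def CE by (cases "J (piT p xs x) p") (simp_all add: pv pc1 pc2 iv ic1 ic2)
      next
        case False
        then show ?thesis using xv yv v1 b
          unfolding entry Op_def CE by (cases "J (piT p xs x) p") (simp_all add: pv pc1 iv ic1)
      qed
    next
      case yv: False
      have "ordp S.e' (posn xs x) (posn xs y) = ordp e (posn xs x) (posn xs y)"
        using S.a[of "posn xs x" "posn xs y"] pk pj xv yv by auto
      then show ?thesis using xv yv unfolding entry Op_def CE by simp
    qed
  qed
  have "transpose Bm ** Cm J p xs e ** Bm = Cm J p xs S.e'" using main by (simp add: vec_eq_iff)
  then show ?thesis unfolding mcong_def S.e'_def using inv by metis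
qed

end



context AP
begin

abbreviation inT :: "'n \<Rightarrow> bool" where "inT x \<equiv> x \<in> set xs \<and> x \<noteq> p"

lemma posn_notT: "\<not> inT x \<Longrightarrow> posn xs x = 0"
  using posn_out posn_p by (cases "x \<in> set xs") auto

lemma pk: "posn xs x \<le> length xs - 1" using posn_lt[of x] by auto

lemma Cm_cong: "(\<And>m. 0 < m \<Longrightarrow> m \<le> length xs - 1 \<Longrightarrow> e m = e' m) \<Longrightarrow> Cm J p xs e = Cm J p xs e'"
proof -
  assume h: "\<And>m. 0 < m \<Longrightarrow> m \<le> length xs - 1 \<Longrightarrow> e m = e' m"
  have "ordp e (posn xs a) (posn xs b) = ordp e' (posn xs a) (posn xs b)" for a b
    using ordp_cong[of "length xs - 1" e e', OF h pk pk] by blast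
  then show ?thesis unfolding Cm_def Pm_def by (simp add: vec_eq_iff)
qed

lemma push_aux: "\<forall>i e. length xs - 1 - i = n \<longrightarrow> i \<le> length xs - 1 \<longrightarrow> 1 \<le> i \<longrightarrow> \<not> e i \<longrightarrow> (\<forall>m. i < m \<and> m \<le> length xs - 1 \<longrightarrow> e m)
   \<longrightarrow> mcong (Cm J p xs e) (Cm J p xs (e(i := True)))"
proof (induction n)
  case 0
  show ?case
  proof (intro allI impI)
    fix i and e :: "nat \<Rightarrow> bool"
    assume h: "length xs - 1 - i = 0" "i \<le> length xs - 1" "1 \<le> i" "\<not> e i" "\<forall>m. i < m \<and> m \<le> length xs - 1 \<longrightarrow> e m"
    have ik: "i = length xs - 1" using h by auto
    have r: "mcong (Cm J p xs e) (Cm J p xs (e(i := True, Suc i := False)))"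
      using reflect[of i e] h ik by auto
    have "Cm J p xs (e(i := True, Suc i := False)) = Cm J p xs (e(i := True))"
      by (rule Cm_cong) (use ik in auto)
    then show "mcong (Cm J p xs e) (Cm J p xs (e(i := True)))" using r by simp
  qed
next
  case (Suc n)
  show ?case
  proof (intro allI impI)
    fix i and e :: "nat \<Rightarrow> bool"
    assume h: "length xs - 1 - i = Suc n" "i \<le> length xs - 1" "1 \<le> i" "\<not> e i" "\<forall>m. i < m \<and> m \<le> length xs - 1 \<longrightarrow> e m"
    have ik: "i < length xs - 1" using h by auto
    have eS: "e (Suc i)" using h(5) ik by auto
    have r: "mcong (Cm J p xs e) (Cm J p xs (e(i := True, Suc i := False)))"
      using reflect[of i e] h ik eS by auto
    define e1 where "e1 = e(i := True, Suc i := False)"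
    have "mcong (Cm J p xs e1) (Cm J p xs (e1(Suc i := True)))"
      using Suc.IH[rule_format, of "Suc i" e1] h ik unfolding e1_def by auto
    moreover have "e1(Suc i := True) = e(i := True)" unfolding e1_def using eS by (auto simp: fun_eq_iff)
    ultimately show "mcong (Cm J p xs e) (Cm J p xs (e(i := True)))" using r mcong_trans unfolding e1_def by metis
  qed
qed

lemma to_true_aux: "\<forall>e. (\<forall>m. i < m \<and> m \<le> length xs - 1 \<longrightarrow> e m) \<longrightarrow> mcong (Cm J p xs e) (Cm J p xs (\<lambda>_. True))"
proof (induction i)
  case 0
  show ?case
  proof (intro allI impI)
    fix e :: "nat \<Rightarrow> bool" assume h: "\<forall>m. 0 < m \<and> m \<le> length xs - 1 \<longrightarrow> e m"
    have "Cm J p xs e = Cm J p xs (\<lambda>_. True)" by (rule Cm_cong) (use h in auto)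
    then show "mcong (Cm J p xs e) (Cm J p xs (\<lambda>_. True))" using mcong_refl by metis
  qed
next
  case (Suc i)
  show ?case
  proof (intro allI impI)
    fix e :: "nat \<Rightarrow> bool" assume h: "\<forall>m. Suc i < m \<and> m \<le> length xs - 1 \<longrightarrow> e m"
    show "mcong (Cm J p xs e) (Cm J p xs (\<lambda>_. True))"
    proof (cases "Suc i \<le> length xs - 1 \<and> \<not> e (Suc i)")
      case False
      then have "\<forall>m. i < m \<and> m \<le> length xs - 1 \<longrightarrow> e m" using h by (metis Suc_lessI le_less_trans not_le)
      then show ?thesis using Suc.IH by blast
    next
      case True
      then have "mcong (Cm J p xs e) (Cm J p xs (e(Suc i := True)))"
        using push_aux[of "length xs - 1 - Suc i", rule_format, of "Suc i" e] h by auto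
      moreover have "\<forall>m. i < m \<and> m \<le> length xs - 1 \<longrightarrow> (e(Suc i := True)) m" using h by (auto simp: Suc_lessI)
      then have "mcong (Cm J p xs (e(Suc i := True))) (Cm J p xs (\<lambda>_. True))" using Suc.IH by blast
      ultimately show ?thesis by (rule mcong_trans)
    qed
  qed
qed

lemma to_true: "mcong (Cm J p xs e) (Cm J p xs (\<lambda>_. True))"
  using to_true_aux[of "length xs - 1"] by auto

lemma Pm_poset: "is_poset (Pm J p xs e)"
  unfolding is_poset_def
proof (intro conjI allI impI)
  fix i show "Pm J p xs e i i" unfolding Pm_def using refl by simp
next
  fix x y assume h: "Pm J p xs e x y \<and> Pm J p xs e y x"
  have pe: "posn xs x = posn xs y" using h ordp_antisym unfolding Pm_def by blast
  have pie: "piT p xs x = piT p xs y" using h antisym unfolding Pm_def by blast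
  show "x = y"
  proof (cases "inT x")
    case True
    then have "posn xs y \<noteq> 0" using posn_T[of x] pe by metis
    have iy: "inT y"
    proof (rule ccontr)
      assume "\<not> inT y" then have "posn xs y = 0" by (rule posn_notT)
      then show False using \<open>posn xs y \<noteq> 0\<close> by simp
    qed
    have a1: "xs ! posn xs x = x" using nth_posn True by blast
    have a2: "xs ! posn xs y = y" using nth_posn iy by blast
    show ?thesis using a1 a2 pe by metis
  next
    case False
    then have "posn xs y = 0" using posn_notT[of x] pe by metis
    have iy: "\<not> inT y"
    proof
      assume "inT y" then have "posn xs y \<noteq> 0" using posn_T by blast
      then show False using \<open>posn xs y = 0\<close> by simp
    qed
    show ?thesis using piT_id[OF False] piT_id[OF iy] pie by metis
  qed
next
  fix x y z assume h: "Pm J p xs e x y \<and> Pm J p xs e y z"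
  then show "Pm J p xs e x z" unfolding Pm_def using ordp_trans[of e "posn xs x" "posn xs y" "posn xs z"]
    trans[of "piT p xs x" "piT p xs y" "piT p xs z"] by blast
qed

lemma Pm_offT: "\<not> inT x \<Longrightarrow> \<not> inT y \<Longrightarrow> Pm J p xs e x y = J x y"
  unfolding Pm_def using posn_notT piT_id by simp

lemma hasse_Pm_off: "\<not> (u \<in> set xs \<and> v \<in> set xs) \<Longrightarrow> hasse (Pm J p xs e) u v \<longleftrightarrow>
   (\<not> inT u \<and> \<not> inT v \<and> J u v \<and> u \<noteq> v \<and> \<not> (\<exists>w. \<not> inT w \<and> w \<noteq> u \<and> w \<noteq> v \<and> J u w \<and> J w v))"
proof -
  assume nb: "\<not> (u \<in> set xs \<and> v \<in> set xs)"
  show ?thesis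
  proof (cases "inT u \<or> inT v")
    case True
    have "\<not> hasse (Pm J p xs e) u v"
    proof
      assume hs: "hasse (Pm J p xs e) u v"
      then have P: "Pm J p xs e u v" unfolding hasse_def by blast
      have "u \<noteq> p" "v \<noteq> p" using True nb p_in by auto
      moreover have "Pm J p xs e u p" "Pm J p xs e p v"
      proof -
        show "Pm J p xs e u p"
        proof (cases "inT u")
          case True
          then have "v \<notin> set xs" using nb by auto
          then show ?thesis using P True refl unfolding Pm_def by (simp add: posn_out piT_T p_in)
        next
          case False
          then have iv: "inT v" using \<open>inT u \<or> inT v\<close> by blast
          show ?thesis using P refl iv piT_id[OF False] posn_notT[OF False] piT_T[of v] unfolding Pm_def by (simp add: piT_T p_in)
        qed
        show "Pm J p xs e p v"
        proof (cases "inT u")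
          case True
          then have "v \<notin> set xs" using nb by auto
          then show ?thesis using P True refl unfolding Pm_def by (simp add: posn_out piT_T piT_id p_in)
        next
          case False
          then have iv: "inT v" using \<open>inT u \<or> inT v\<close> by blast
          show ?thesis using P refl iv piT_id[OF False] posn_notT[OF False] piT_T[of v] unfolding Pm_def by (simp add: piT_T p_in)
        qed
      qed
      ultimately have "\<exists>k. k \<noteq> u \<and> k \<noteq> v \<and> Pm J p xs e u k \<and> Pm J p xs e k v" by metis
      then show False using hs unfolding hasse_def by simp
    qed
    then show ?thesis using True by blast
  next
    case False
    have ex: "(\<exists>w. w \<noteq> u \<and> w \<noteq> v \<and> Pm J p xs e u w \<and> Pm J p xs e w v) \<longleftrightarrow>
          (\<exists>w. \<not> inT w \<and> w \<noteq> u \<and> w \<noteq> v \<and> J u w \<and> J w v)"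
    proof
      assume "\<exists>w. w \<noteq> u \<and> w \<noteq> v \<and> Pm J p xs e u w \<and> Pm J p xs e w v"
      then obtain w where w: "w \<noteq> u" "w \<noteq> v" "Pm J p xs e u w" "Pm J p xs e w v" by blast
      have "\<not> inT w"
      proof
        assume "inT w"
        have "ordp e 0 (posn xs w)" "ordp e (posn xs w) 0" using w False posn_notT unfolding Pm_def by auto
        then have "posn xs w = 0" using ordp_antisym by blast
        then show False using posn_T \<open>inT w\<close> by blast
      qed
      then show "\<exists>w. \<not> inT w \<and> w \<noteq> u \<and> w \<noteq> v \<and> J u w \<and> J w v" using w Pm_offT False by metis
    next
      assume "\<exists>w. \<not> inT w \<and> w \<noteq> u \<and> w \<noteq> v \<and> J u w \<and> J w v"
      then show "\<exists>w. w \<noteq> u \<and> w \<noteq> v \<and> Pm J p xs e u w \<and> Pm J p xs e w v" using Pm_offT False by metis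
    qed
    show ?thesis using ex False Pm_offT[of u v e] unfolding hasse_def by blast
  qed
qed

lemma hasse_indep: "\<not> (u \<in> set xs \<and> v \<in> set xs) \<Longrightarrow> hasse (Pm J p xs e) u v = hasse (Pm J p xs e') u v"
  using hasse_Pm_off by blast

lemma Pm_on: "i < length xs \<Longrightarrow> l < length xs \<Longrightarrow> Pm J p xs e (xs ! i) (xs ! l) = ordp e i l"
  unfolding Pm_def using refl piT_T by simp

lemma hasse_Pm_on: "i < length xs \<Longrightarrow> l < length xs \<Longrightarrow>
  hasse (Pm J p xs e) (xs ! i) (xs ! l) \<longleftrightarrow> (l = Suc i \<and> e l) \<or> (i = Suc l \<and> \<not> e i)"
proof -
  assume il: "i < length xs" "l < length xs"
  have ne: "(xs ! i \<noteq> xs ! l) = (i \<noteq> l)" using dist il nth_eq_iff_index_eq by blast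
  have ex: "(\<exists>w. w \<noteq> xs ! i \<and> w \<noteq> xs ! l \<and> Pm J p xs e (xs ! i) w \<and> Pm J p xs e w (xs ! l)) \<longleftrightarrow>
        (\<exists>m<length xs. m \<noteq> i \<and> m \<noteq> l \<and> ordp e i m \<and> ordp e m l)"
  proof
    assume "\<exists>w. w \<noteq> xs ! i \<and> w \<noteq> xs ! l \<and> Pm J p xs e (xs ! i) w \<and> Pm J p xs e w (xs ! l)"
    then obtain w where w: "w \<noteq> xs ! i" "w \<noteq> xs ! l" "Pm J p xs e (xs ! i) w" "Pm J p xs e w (xs ! l)" by blast
    have ws: "w \<in> set xs"
    proof (rule ccontr)
      assume "w \<notin> set xs"
      then have "J p w" "J w p" using w(3,4) il piT_T piT_id unfolding Pm_def by auto
      then have "w = p" using antisym by blast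
      then show False using \<open>w \<notin> set xs\<close> p_in by blast
    qed
    then obtain m where m: "m < length xs" "w = xs ! m" by (metis in_set_conv_nth)
    then show "\<exists>m<length xs. m \<noteq> i \<and> m \<noteq> l \<and> ordp e i m \<and> ordp e m l" using w Pm_on il by metis
  next
    assume "\<exists>m<length xs. m \<noteq> i \<and> m \<noteq> l \<and> ordp e i m \<and> ordp e m l"
    then obtain m where m: "m<length xs" "m \<noteq> i" "m \<noteq> l" "ordp e i m" "ordp e m l" by blast
    have "xs ! m \<noteq> xs ! i" "xs ! m \<noteq> xs ! l" using m il dist nth_eq_iff_index_eq by blast+
    then show "\<exists>w. w \<noteq> xs ! i \<and> w \<noteq> xs ! l \<and> Pm J p xs e (xs ! i) w \<and> Pm J p xs e w (xs ! l)"
      using m Pm_on il by metis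
  qed
  have "hasse (Pm J p xs e) (xs ! i) (xs ! l) \<longleftrightarrow>
     (ordp e i l \<and> i \<noteq> l \<and> \<not> (\<exists>m<length xs. m \<noteq> i \<and> m \<noteq> l \<and> ordp e i m \<and> ordp e m l))"
    by (simp only: hasse_def ex ne Pm_on[OF il])
  then show ?thesis using ordp_hasse_iff[OF il, of e] by simp
qed

lemma hadj_Pm_on: "i < length xs \<Longrightarrow> l < length xs \<Longrightarrow>
  hadj (Pm J p xs e) (xs ! i) (xs ! l) \<longleftrightarrow> l = Suc i \<or> i = Suc l"
  unfolding hadj_def hasse_Pm_on[of i l e] hasse_Pm_on[of l i e] by auto

lemma hadj_Pm_indep: "hadj (Pm J p xs e) = hadj (Pm J p xs e')"
proof (intro ext)
  fix u v
  show "hadj (Pm J p xs e) u v = hadj (Pm J p xs e') u v"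
  proof (cases "u \<in> set xs \<and> v \<in> set xs")
    case True
    then obtain i l where "i < length xs" "l < length xs" "u = xs ! i" "v = xs ! l" by (metis in_set_conv_nth)
    then show ?thesis using hadj_Pm_on by metis
  next
    case False
    then show ?thesis unfolding hadj_def using hasse_indep[of u v e e'] hasse_indep[of v u e e'] by blast
  qed
qed

lemma J_Pm: "J = Pm J p xs (eJ J xs)" using J_eq_Pm by (intro ext) blast

lemma hadj_J_Pm: "hadj J = hadj (Pm J p xs e)"
  using J_Pm hadj_Pm_indep by metis

lemma reor_Pm: "reoriented_on J (set xs) (Pm J p xs e)"
  unfolding reoriented_on_def
proof (intro conjI allI impI ballI)
  show "is_poset (Pm J p xs e)" by (rule Pm_poset)
next
  fix u v assume "\<not> (u \<in> set xs \<and> v \<in> set xs)"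
  then show "hasse (Pm J p xs e) u v = hasse J u v" using hasse_indep J_Pm by metis
next
  fix u v show "hadj (Pm J p xs e) u v = hadj J u v" using hadj_J_Pm by metis
qed

lemma J_offT: "\<not> inT x \<Longrightarrow> \<not> inT y \<Longrightarrow> J x y \<longleftrightarrow> (\<lambda>a b. \<not> inT a \<and> \<not> inT b \<and> hasse J a b)\<^sup>*\<^sup>* x y"
proof -
  assume nx: "\<not> inT x" and ny: "\<not> inT y"
  show ?thesis
  proof
    assume "J x y"
    then have "(hasse J)\<^sup>*\<^sup>* x y" by (rule poset_rtrancl_hasse[OF pos])
    then have "(\<lambda>a b. \<not> inT a \<and> \<not> inT b \<and> hasse J a b)\<^sup>*\<^sup>* (piT p xs x) (piT p xs y)"
    proof (rule rtrancl_map)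
      fix a b assume h: "hasse J a b"
      have ha: "hadj J a b" "hadj J b a" using h unfolding hadj_def by auto
      show "piT p xs a = piT p xs b \<or> (\<not> inT (piT p xs a) \<and> \<not> inT (piT p xs b) \<and> hasse J (piT p xs a) (piT p xs b))"
      proof (cases "inT a")
        case True
        then have "b \<in> set xs" using comp ha by blast
        then show ?thesis using True unfolding piT_def by auto
      next
        case False
        show ?thesis
        proof (cases "inT b")
          case True
          then have "a \<in> set xs" using comp ha by blast
          then show ?thesis using True False unfolding piT_def by auto
        next
          case False2: False
          then show ?thesis using h piT_id[OF False] piT_id[OF False2] False False2 by simp
        qed
      qed
    qed
    then show "(\<lambda>a b. \<not> inT a \<and> \<not> inT b \<and> hasse J a b)\<^sup>*\<^sup>* x y" using piT_id[OF nx] piT_id[OF ny] by simp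
  next
    assume a: "(\<lambda>a b. \<not> inT a \<and> \<not> inT b \<and> hasse J a b)\<^sup>*\<^sup>* x y"
    have sub: "(\<lambda>a b. \<not> inT a \<and> \<not> inT b \<and> hasse J a b) \<le> J" by (simp add: le_fun_def hasse_def)
    have "J\<^sup>*\<^sup>* x y" using predicate2D[OF rtranclp_mono[OF sub] a] .
    then show "J x y" by (rule rtranclp_J)
  qed
qed

end

lemma AP_transfer:
  assumes "AP J p xs" and "is_poset J'" and "hadj J' = hadj J"
  shows "AP J' p xs"
proof -
  interpret A: AP J p xs by (rule assms(1))
  show ?thesis
  proof (unfold_locales)
    show "is_poset J'" by (rule assms(2))
    show "distinct xs" by (rule A.dist)
    show "xs ! 0 = p" by (rule A.x0)
    show "2 \<le> length xs" by (rule A.len)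
    fix u v assume "u \<in> set xs" "v \<in> set xs"
    then show "hadj J' u v = (\<exists>i. Suc i < length xs \<and> {xs ! i, xs ! Suc i} = {u, v})"
      using A.adj assms(3) by simp
  next
    fix t y assume "t \<in> set xs" "t \<noteq> p" "hadj J' t y"
    then show "y \<in> set xs" using A.comp assms(3) by simp
  qed
qed

lemma reor_hadj:
  assumes "reoriented_on J S J'" shows "hadj J' = hadj J"
proof (intro ext)
  fix u v
  show "hadj J' u v = hadj J u v"
  proof (cases "u \<in> S \<and> v \<in> S")
    case True then show ?thesis using assms unfolding reoriented_on_def by blast
  next
    case False
    then have "hasse J' u v = hasse J u v" "hasse J' v u = hasse J v u" using assms unfolding reoriented_on_def by blast+
    then show ?thesis unfolding hadj_def by simp
  qed
qed

lemma congr_reor: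
  assumes ap: "AP J p xs" and r: "reoriented_on J (set xs) J'"
  shows "mcong (incmat J') (incmat J)"
proof -
  have ap': "AP J' p xs" using AP_transfer[OF ap _ reor_hadj[OF r]] r unfolding reoriented_on_def by blast
  interpret A: AP J p xs by (rule ap)
  interpret B: AP J' p xs by (rule ap')
  have hs: "hasse J' a b = hasse J a b" if "\<not> A.inT a" "\<not> A.inT b" for a b
  proof (cases "a \<in> set xs \<and> b \<in> set xs")
    case True
    then have "a = p" "b = p" using that by auto
    then show ?thesis unfolding hasse_def by simp
  next
    case False then show ?thesis using r unfolding reoriented_on_def by blast
  qed
  have rel: "(\<lambda>a b. \<not> A.inT a \<and> \<not> A.inT b \<and> hasse J' a b) = (\<lambda>a b. \<not> A.inT a \<and> \<not> A.inT b \<and> hasse J a b)"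
    using hs by (intro ext) blast
  have off: "J' x y = J x y" if "\<not> A.inT x" "\<not> A.inT y" for x y
    using A.J_offT[OF that] B.J_offT[OF that] rel by simp
  have PmEq: "Pm J' p xs e = Pm J p xs e" for e
    unfolding Pm_def using off A.piT_notT by (intro ext) metis
  have CmEq: "Cm J' p xs e = Cm J p xs e" for e unfolding Cm_def PmEq ..
  have e1: "incmat J = Cm J p xs (eJ J xs)" using trans[OF arg_cong[OF A.J_Pm, of incmat] incmat_Pm] .
  have e2: "incmat J' = Cm J' p xs (eJ J' xs)" using trans[OF arg_cong[OF B.J_Pm, of incmat] incmat_Pm] .
  have 1: "mcong (incmat J) (Cm J p xs (\<lambda>_. True))"
    using A.to_true[of "eJ J xs"] unfolding e1 .
  have 2: "mcong (incmat J') (Cm J p xs (\<lambda>_. True))"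
    using B.to_true[of "eJ J' xs"] unfolding e2 CmEq .
  show ?thesis by (rule mcong_trans[OF 2 mcong_sym[OF 1]])
qed




lemma anchored_hadj: "hadj A = hadj B \<Longrightarrow> anchored_path A p S = anchored_path B p S"
  by (simp add: anchored_path_def disconnected_del_def is_component_del_def conn_del_def induced_is_path_def)

lemma mcong_sgc: "mcong (incmat J') (incmat J) \<Longrightarrow> strong_gram_congr J J'"
  unfolding mcong_def strong_gram_congr_def
proof (elim exE conjE)
  fix B B' :: "int^'a^'a" assume h: "B ** B' = mat 1" "B' ** B = mat 1" "incmat J = transpose B ** incmat J' ** B"
  have "det B * det B' = 1" using arg_cong[OF h(1), of det] det_mul[of B B'] by simp
  then have "det B = 1 \<or> det B = -1" by (rule pos_zmult_eq_1_iff_lemma)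
  then show "\<exists>B. (det B = 1 \<or> det B = - 1) \<and> incmat J = transpose B ** incmat J' ** B" using h(3) by blast
qed

definition rm :: "int^'n^'m \<Rightarrow> real^'n^'m" where "rm A = (\<chi> i j. real_of_int (A $ i $ j))"

lemma rm_mul: "rm (A ** B) = rm A ** rm B"
  by (simp add: rm_def matrix_matrix_mult_def vec_eq_iff of_int_sum)
lemma rm_tr: "rm (transpose A) = transpose (rm A)"
  by (simp add: rm_def transpose_def vec_eq_iff)

lemma gram_rm: "gram A = (1/2) *\<^sub>R (rm (incmat A) + transpose (rm (incmat A)))"
  by (simp add: gram_def rm_def transpose_def vec_eq_iff)

lemma mat_radd: "(X + Y) ** (R :: real^'n^'n) = X ** R + Y ** R"
  by (simp add: matrix_matrix_mult_def vec_eq_iff sum.distrib distrib_right)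
lemma mat_lscale: "(c *\<^sub>R X) ** (R :: real^'n^'n) = c *\<^sub>R (X ** R)"
  by (simp add: matrix_matrix_mult_def vec_eq_iff sum_distrib_left mult.assoc)
lemma mat_rscale: "(R :: real^'n^'n) ** (c *\<^sub>R X) = c *\<^sub>R (R ** X)"
  by (simp add: matrix_matrix_mult_def vec_eq_iff sum_distrib_left algebra_simps)
lemma tr_add: "transpose (X + Y) = transpose X + transpose (Y :: real^'n^'n)"
  by (simp add: transpose_def vec_eq_iff)

lemma cong_sym_part:
  fixes R M :: "real^'n^'n"
  shows "transpose R ** ((1/2) *\<^sub>R (M + transpose M)) ** R =
    (1/2) *\<^sub>R ((transpose R ** M ** R) + transpose (transpose R ** M ** R))"
proof -
  have "transpose (transpose R ** M ** R) = transpose R ** transpose M ** R"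
    by (simp add: matrix_transpose_mul matrix_mul_assoc)
  then show ?thesis by (simp add: mat_radd mat_lscale mat_rscale matrix_add_ldistrib)
qed

lemma psd_cong:
  fixes R G :: "real^'n^'n"
  assumes "psd G" shows "psd (transpose R ** G ** R)"
  unfolding psd_def
proof
  fix x :: "real^'n"
  have eq: "(transpose R ** G ** R) *v x = transpose R *v (G *v (R *v x))" by (simp only: matrix_vector_mul_assoc matrix_mul_assoc)
  have "x \<bullet> ((transpose R ** G ** R) *v x) = (x v* transpose R) \<bullet> (G *v (R *v x))"
    unfolding eq dot_lmul_matrix ..
  then have "x \<bullet> ((transpose R ** G ** R) *v x) = (R *v x) \<bullet> (G *v (R *v x))"
    by (simp only: vector_transpose_matrix)
  then show "0 \<le> x \<bullet> ((transpose R ** G ** R) *v x)" using assms unfolding psd_def by simp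
qed

lemma gram_mcong:
  assumes "mcong (incmat A) (incmat A')"
  shows "(psd (gram A) \<longrightarrow> psd (gram A')) \<and> rank (gram A') \<le> rank (gram A)"
proof -
  obtain B B' where h: "incmat A' = transpose B ** incmat A ** B" using assms unfolding mcong_def by blast
  have r: "rm (incmat A') = transpose (rm B) ** rm (incmat A) ** rm B" using h by (simp add: rm_mul rm_tr)
  have g: "gram A' = transpose (rm B) ** gram A ** rm B"
    unfolding gram_rm r cong_sym_part ..
  have "rank (gram A') \<le> rank (transpose (rm B) ** gram A)" unfolding g by (rule rank_mul_le_left)
  also have "\<dots> \<le> rank (gram A)" by (rule rank_mul_le_right)
  finally show ?thesis using psd_cong g by metis
qed

lemma nonneg_mcong:
  assumes "mcong (incmat A) (incmat A')"
  shows "nonneg_corank A' r \<longleftrightarrow> nonneg_corank A r"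
proof -
  have 1: "(psd (gram A) \<longrightarrow> psd (gram A')) \<and> rank (gram A') \<le> rank (gram A)" by (rule gram_mcong[OF assms])
  have 2: "(psd (gram A') \<longrightarrow> psd (gram A)) \<and> rank (gram A) \<le> rank (gram A')" by (rule gram_mcong[OF mcong_sym[OF assms]])
  have "rank (gram A) = rank (gram A')" using 1 2 by simp
  moreover have "psd (gram A) = psd (gram A')" using 1 2 by blast
  ultimately show ?thesis unfolding nonneg_corank_def by simp
qed

lemma adj_rev_aux:
  assumes "\<exists>i. Suc i < length ys \<and> {ys ! i, ys ! Suc i} = {u,v}"
  shows "\<exists>i. Suc i < length ys \<and> {rev ys ! i, rev ys ! Suc i} = {u,v}"
proof -
  obtain i where i: "Suc i < length ys" "{ys ! i, ys ! Suc i} = {u,v}" using assms by blast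
  define i' where "i' = length ys - 2 - i"
  have s: "Suc i' < length ys" using i unfolding i'_def by auto
  have n1: "length ys - Suc i' = Suc i" using i unfolding i'_def by linarith
  have n2: "length ys - Suc (Suc i') = i" using i unfolding i'_def by linarith
  have a: "rev ys ! i' = ys ! Suc i" using s rev_nth[of i' ys] n1 by simp
  have b: "rev ys ! Suc i' = ys ! i" using s rev_nth[of "Suc i'" ys] n2 by simp
  have "{rev ys ! i', rev ys ! Suc i'} = {u,v}" using i(2) a b by (simp add: insert_commute)
  then show ?thesis using s by blast
qed

lemma adj_rev: "(\<exists>i. Suc i < length ys \<and> {rev ys ! i, rev ys ! Suc i} = {u,v}) \<longleftrightarrow>
  (\<exists>i. Suc i < length ys \<and> {ys ! i, ys ! Suc i} = {u,v})"
  using adj_rev_aux[of ys u v] adj_rev_aux[of "rev ys" u v] by auto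

lemma comp_lemma:
  assumes "is_component_del J p (S - {p})" "p \<in> S" "t \<in> S" "t \<noteq> p" "hadj J t y"
  shows "y \<in> S"
proof (cases "y = p")
  case True then show ?thesis using assms by simp
next
  case False
  have "conn_del J p t y" unfolding conn_del_def using assms(4,5) False by (simp add: r_into_rtranclp)
  then show ?thesis using assms(1,3,4) False unfolding is_component_del_def by blast
qed

lemma mk_AP:
  fixes J :: "'n::finite \<Rightarrow> 'n \<Rightarrow> bool"
  assumes P: "is_poset J" and A: "anchored_path J p S"
  shows "\<exists>xs. set xs = S \<and> AP J p xs"
proof -
  have A': "p \<in> S \<and> disconnected_del J p \<and> is_component_del J p (S - {p}) \<and> induced_is_path J S \<and> card {v \<in> S. hadj J p v} = 1"
    using A by (simp only: anchored_path_def)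
  have pS: "p \<in> S" using A' by (elim conjE)
  have cp: "is_component_del J p (S - {p})" using A' by (elim conjE)
  have ip: "induced_is_path J S" using A' by (elim conjE)
  have c1: "card {v \<in> S. hadj J p v} = 1" using A' by (elim conjE)
  obtain ys where ysP: "distinct ys \<and> set ys = S \<and> (\<forall>u\<in>S. \<forall>v\<in>S. hadj J u v \<longleftrightarrow> (\<exists>i. Suc i < length ys \<and> {ys!i, ys!Suc i} = {u,v}))"
    using ip unfolding induced_is_path_def by (rule exE)
  have ys: "distinct ys" "set ys = S" using ysP by blast+
  have yadj: "\<forall>u\<in>S. \<forall>v\<in>S. hadj J u v \<longleftrightarrow> (\<exists>i. Suc i < length ys \<and> {ys!i, ys!Suc i} = {u,v})"
    using ysP by (elim conjE)
  obtain q where q: "q < length ys" "ys ! q = p" using pS ys by (metis in_set_conv_nth)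
  have fin: "finite S" using ys by auto
  have "{v \<in> S. hadj J p v} \<noteq> {}" using c1 by (metis card.empty zero_neq_one)
  then obtain w where w: "w \<in> S" "hadj J p w" by blast
  have wp: "w \<noteq> p" using w hadj_irrefl by metis
  have "card {p, w} \<le> card S" using w pS fin by (intro card_mono) auto
  then have L2: "2 \<le> length ys" using wp ys distinct_card by fastforce
  have qend: "q = 0 \<or> q = length ys - 1"
  proof (rule ccontr)
    assume "\<not> (q = 0 \<or> q = length ys - 1)"
    then have q0: "0 < q" and qL: "Suc q < length ys" using q by auto
    define a where "a = ys ! (q - 1)"
    define b where "b = ys ! Suc q"
    have aS: "a \<in> S" "b \<in> S" unfolding a_def b_def using ys qL by auto
    have "{ys ! (q-1), ys ! Suc (q-1)} = {p, a}" using q q0 unfolding a_def by (simp add: insert_commute)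
    moreover have "Suc (q-1) < length ys" using q0 qL by simp
    ultimately have ha: "hadj J p a" unfolding yadj[rule_format, OF pS aS(1)] by blast
    have "{ys ! q, ys ! Suc q} = {p, b}" using q unfolding b_def by simp
    then have hb: "hadj J p b" unfolding yadj[rule_format, OF pS aS(2)] using qL by blast
    have ab: "a \<noteq> b" unfolding a_def b_def using ys(1) qL q0 nth_eq_iff_index_eq by fastforce
    have "{a, b} \<subseteq> {v \<in> S. hadj J p v}" using aS ha hb by auto
    then have "card {a, b} \<le> card {v \<in> S. hadj J p v}" using fin by (intro card_mono) auto
    then show False using ab c1 by simp
  qed
  have compl: "\<And>t y. t \<in> S \<Longrightarrow> t \<noteq> p \<Longrightarrow> hadj J t y \<Longrightarrow> y \<in> S" using comp_lemma[OF cp pS] by blast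
  show ?thesis
  proof (cases "q = 0")
    case True
    have "AP J p ys"
    proof (unfold_locales)
      show "is_poset J" by (rule P)
      show "distinct ys" by (rule ys(1))
      show "ys ! 0 = p" using q True by simp
      show "2 \<le> length ys" by (rule L2)
      fix u v assume "u \<in> set ys" "v \<in> set ys"
      then show "hadj J u v = (\<exists>i. Suc i < length ys \<and> {ys ! i, ys ! Suc i} = {u, v})" using yadj ys by blast
    next
      fix t y assume "t \<in> set ys" "t \<noteq> p" "hadj J t y"
      then show "y \<in> set ys" using compl ys by blast
    qed
    then show ?thesis using ys by blast
  next
    case False
    then have qe: "q = length ys - 1" using qend by simp
    have "AP J p (rev ys)"
    proof (unfold_locales)
      show "is_poset J" by (rule P)
      show "distinct (rev ys)" using ys by simp
      have "ys \<noteq> []" using L2 by auto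
      then show "rev ys ! 0 = p" using q qe rev_nth[of 0 ys] by simp
      show "2 \<le> length (rev ys)" using L2 by simp
      fix u v assume "u \<in> set (rev ys)" "v \<in> set (rev ys)"
      then show "hadj J u v = (\<exists>i. Suc i < length (rev ys) \<and> {rev ys ! i, rev ys ! Suc i} = {u, v})"
        using yadj ys adj_rev[of ys u v] by simp
    next
      fix t y assume "t \<in> set (rev ys)" "t \<noteq> p" "hadj J t y"
      then show "y \<in> set (rev ys)" using compl ys by simp
    qed
    then show ?thesis using ys by (metis set_rev)
  qed
qed

context AP begin

lemma out_min: "{x \<in> set xs. \<forall>y\<in>set xs. Pm J p xs (\<lambda>_. True) y x \<longrightarrow> y = x} = {p}"
proof -
  have Pe: "Pm J p xs (\<lambda>_. True) y x \<longleftrightarrow> posn xs y \<le> posn xs x" if "x \<in> set xs" "y \<in> set xs" for x y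
    unfolding Pm_def using that refl piT_T[of x] piT_T[of y] by (simp add: ordp_true)
  show ?thesis
  proof (intro equalityI subsetI)
    fix x assume "x \<in> {x \<in> set xs. \<forall>y\<in>set xs. Pm J p xs (\<lambda>_. True) y x \<longrightarrow> y = x}"
    then have x: "x \<in> set xs" "\<forall>y\<in>set xs. Pm J p xs (\<lambda>_. True) y x \<longrightarrow> y = x" by auto
    have "Pm J p xs (\<lambda>_. True) p x" using Pe[OF x(1) p_in] by simp
    then show "x \<in> {p}" using x p_in by auto
  next
    fix x assume "x \<in> {p}"
    then have xp: "x = p" by simp
    have "y = p" if "y \<in> set xs" "Pm J p xs (\<lambda>_. True) y p" for y
    proof -
      have "posn xs y = 0" using Pe[OF p_in that(1)] that(2) by simp
      then show ?thesis using posn_T that(1) by blast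
    qed
    then show "x \<in> {x \<in> set xs. \<forall>y\<in>set xs. Pm J p xs (\<lambda>_. True) y x \<longrightarrow> y = x}" using xp p_in by auto
  qed
qed

lemma in_max: "{x \<in> set xs. \<forall>y\<in>set xs. Pm J p xs (\<lambda>_. False) x y \<longrightarrow> y = x} = {p}"
proof -
  have Pe: "Pm J p xs (\<lambda>_. False) x y \<longleftrightarrow> posn xs y \<le> posn xs x" if "x \<in> set xs" "y \<in> set xs" for x y
    unfolding Pm_def using that refl piT_T[of x] piT_T[of y] by (simp add: ordp_false)
  show ?thesis
  proof (intro equalityI subsetI)
    fix x assume "x \<in> {x \<in> set xs. \<forall>y\<in>set xs. Pm J p xs (\<lambda>_. False) x y \<longrightarrow> y = x}"
    then have x: "x \<in> set xs" "\<forall>y\<in>set xs. Pm J p xs (\<lambda>_. False) x y \<longrightarrow> y = x" by auto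
    have "Pm J p xs (\<lambda>_. False) x p" using Pe[OF x(1) p_in] by simp
    then show "x \<in> {p}" using x p_in by auto
  next
    fix x assume "x \<in> {p}"
    then have xp: "x = p" by simp
    have "y = p" if "y \<in> set xs" "Pm J p xs (\<lambda>_. False) p y" for y
    proof -
      have "posn xs y = 0" using Pe[OF p_in that(1)] that(2) by simp
      then show ?thesis using posn_T that(1) by blast
    qed
    then show "x \<in> {x \<in> set xs. \<forall>y\<in>set xs. Pm J p xs (\<lambda>_. False) x y \<longrightarrow> y = x}" using xp p_in by auto
  qed
qed

end

theorem corollary3p4:
  fixes J :: "'n::finite \<Rightarrow> 'n \<Rightarrow> bool" and p :: 'n and Jp :: "'n set"
  assumes "is_poset J"
    and "anchored_path J p Jp"
  shows "((\<exists>J'. reoriented_on J Jp J' \<and> outward_anchored_path J' p Jp) \<and>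
         (\<forall>J'. reoriented_on J Jp J' \<and> outward_anchored_path J' p Jp \<longrightarrow> strong_gram_congr J J')) \<and>
         ((\<exists>J'. reoriented_on J Jp J' \<and> inward_anchored_path J' p Jp) \<and>
         (\<forall>J'. reoriented_on J Jp J' \<and> inward_anchored_path J' p Jp \<longrightarrow> strong_gram_congr J J')) \<and>
         (\<forall>J' r. reoriented_on J Jp J' \<longrightarrow> (nonneg_corank J' r \<longleftrightarrow> nonneg_corank J r))"
proof -
  obtain xs where xs: "set xs = Jp" "AP J p xs" using mk_AP[OF assms] by blast
  interpret A: AP J p xs by (rule xs(2))
  have anc: "anchored_path (Pm J p xs e) p Jp" for e
    using assms(2) anchored_hadj[OF A.hadj_J_Pm[of e]] by simp
  have ex_out: "\<exists>J'. reoriented_on J Jp J' \<and> outward_anchored_path J' p Jp"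
  proof (intro exI conjI)
    show "reoriented_on J Jp (Pm J p xs (\<lambda>_. True))" using A.reor_Pm xs(1) by simp
    show "outward_anchored_path (Pm J p xs (\<lambda>_. True)) p Jp"
      unfolding outward_anchored_path_def using anc A.out_min xs(1) by simp
  qed
  have ex_in: "\<exists>J'. reoriented_on J Jp J' \<and> inward_anchored_path J' p Jp"
  proof (intro exI conjI)
    show "reoriented_on J Jp (Pm J p xs (\<lambda>_. False))" using A.reor_Pm xs(1) by simp
    show "inward_anchored_path (Pm J p xs (\<lambda>_. False)) p Jp"
      unfolding inward_anchored_path_def using anc A.in_max xs(1) by simp
  qed
  have mc: "mcong (incmat J') (incmat J)" if "reoriented_on J Jp J'" for J'
    using congr_reor[OF xs(2)] that xs(1) by simp
  have cg: "strong_gram_congr J J'" if "reoriented_on J Jp J'" for J'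
    using mcong_sgc[OF mc[OF that]] .
  have nn: "nonneg_corank J' r \<longleftrightarrow> nonneg_corank J r" if "reoriented_on J Jp J'" for J' r
    using nonneg_mcong[OF mcong_sym[OF mc[OF that]], of r] by simp
  show ?thesis using ex_out ex_in cg nn by blast
qed


end
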